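(* Let $c_1,\dots,c_m:\{1,\dots,n\}\to\mathbb{R}$ be cost functions and $n$ a positive integer. For each $t\in\{1,\dots,m\}$ let $(f^*_t,\rho^*_t)$ be an optimal solution of the linear program $$\max_{f\in\mathbb{R}^n,\ \rho\in\mathbb{R}}\ \rho\quad\text{s.t.}\quad c_t(y)-\rho\,c_t(x)+(x-z)f(x)-(y-z)f(x+1)\ge0\quad\forall (x,y,z)\in\mathcal{I}_{\mathcal{R}},$$ where $f\in\mathbb{R}^n$ is viewed as a function $f:\{1,\dots,n\}\to\mathbb{R}$ and $c_t(0)=f(0)=f(n+1)=0$. Then $\mathbf{f}_{\mathrm{OPT}}=\{f^*_1,\dots,f^*_m\}$ is an optimal set of distribution rules, i.e. $\mathbf{f}_{\mathrm{OPT}}\in\arg\min_{\mathbf{f}=(f_1,\dots,f_m)\in\mathbb{R}^{n\times m}_{\ge0}}\mathrm{PoA}(\mathcal{G}^n_{\{(c_t,f_t)\}_{t=1}^m})$, and for the set of types $T^*=\{(c_t,f^*_t)\}_{t=1}^m$, $$\mathrm{PoA}(\mathcal{G}^n_{T^*})=\max_{t\in\{1,\dots,m\}}\frac{1}{\rho^*_t}.$$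
   Context: For a positive integer $n$ and a finite set of resource types $T=\{(c_1,f_1),\dots,(c_m,f_m)\}$ with $c_t,f_t:\{1,\dots,n\}\to\mathbb{R}$ and $c_t(0)=0$, the class $\mathcal{G}_T^n$ consists of all local resource allocation games: agent set $N=\{1,\dots,n\}$; a finite set of resources $\mathcal{R}$; for each $r\in\mathcal{R}$ a value $v_r\ge0$ and a type $(c,f)\in T$, giving $c_r=v_rc$, $f_r=v_rf$ (the $f_t$ are called distribution rules); action sets $\mathcal{A}_i\subseteq2^{\mathcal{R}}$, $\mathcal{A}=\mathcal{A}_1\times\dots\times\mathcal{A}_n$. For $a\in\mathcal{A}$, $|a|_r$ is the number of agents $i$ with $r\in a_i$; $C(a)=\sum_rc_r(|a|_r)$ and $J_i(a)=\sum_{r\in a_i}f_r(|a|_r)$. A Nash equilibrium is $a^{ne}$ with $J_i(a^{ne})\le J_i(a_i,a^{ne}_{-i})$ for all $a_i\in\mathcal{A}_i$, $i\in N$; $\mathrm{PoA}(G)=\max_{a\in\mathrm{NE}(G)}C(a)/\min_{a\in\mathcal{A}}C(a)$ and $\mathrm{PoA}(\mathcal{G}_T^n)=\sup_{G\in\mathcal{G}_T^n}\mathrm{PoA}(G)$. With $\mathbb{N}=\{0,1,2,\dots\}$: $\mathcal{I}=\{(x,y,z)\in\mathbb{N}^3:1\le x+y-z\le n,\ z\le\min\{x,y\}\}$, $\mathcal{I}_{\mathcal{R}}=\{(x,y,z)\in\mathcal{I}:x+y-z=n\text{ or }(x-z)(y-z)z=0\}$. *)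

theory Defs
  imports "HOL-Library.Extended_Real" "HOL-Library.FuncSet"
begin

text \<open>A function on {1..n}, extended by 0 outside {1..n} (so that c(0) = f(0) = f(n+1) = 0).\<close>
definition ext0 :: "nat \<Rightarrow> (nat \<Rightarrow> real) \<Rightarrow> nat \<Rightarrow> real" where
  "ext0 n g x = (if 1 \<le> x \<and> x \<le> n then g x else 0)"

definition Iset :: "nat \<Rightarrow> (nat \<times> nat \<times> nat) set" where
  "Iset n = {(x,y,z). 1 \<le> x + y - z \<and> x + y - z \<le> n \<and> z \<le> min x y}"

definition IRset :: "nat \<Rightarrow> (nat \<times> nat \<times> nat) set" where
  "IRset n = {(x,y,z) \<in> Iset n. x + y - z = n \<or> (x - z) * (y - z) * z = 0}"

definition lp_feasible :: "nat \<Rightarrow> (nat \<Rightarrow> real) \<Rightarrow> (nat \<Rightarrow> real) \<Rightarrow> real \<Rightarrow> bool" where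
  "lp_feasible n c f \<rho> \<longleftrightarrow>
     (\<forall>(x,y,z)\<in>IRset n. ext0 n c y - \<rho> * ext0 n c x + real (x - z) * ext0 n f x
                         - real (y - z) * ext0 n f (x + 1) \<ge> 0)"

definition lp_optimal :: "nat \<Rightarrow> (nat \<Rightarrow> real) \<Rightarrow> (nat \<Rightarrow> real) \<Rightarrow> real \<Rightarrow> bool" where
  "lp_optimal n c f \<rho> \<longleftrightarrow> lp_feasible n c f \<rho> \<and> (\<forall>f' \<rho>'. lp_feasible n c f' \<rho>' \<longrightarrow> \<rho>' \<le> \<rho>)"

text \<open>Games: agents {1..n}, resources a finite set R of naturals, values v, type index tau r in {1..m},
  action sets A i (subsets of Pow R). Joint actions are extensional functions on {1..n}.\<close>

definition valid_game :: "nat \<Rightarrow> nat \<Rightarrow> nat set \<Rightarrow> (nat \<Rightarrow> real) \<Rightarrow> (nat \<Rightarrow> nat) \<Rightarrow> (nat \<Rightarrow> nat set set) \<Rightarrow> bool" where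
  "valid_game n m R v tau A \<longleftrightarrow> finite R \<and> (\<forall>r\<in>R. v r \<ge> 0 \<and> tau r \<in> {1..m})
     \<and> (\<forall>i\<in>{1..n}. A i \<subseteq> Pow R)"

definition actions :: "nat \<Rightarrow> (nat \<Rightarrow> nat set set) \<Rightarrow> (nat \<Rightarrow> nat set) set" where
  "actions n A = PiE {1..n} A"

definition load :: "nat \<Rightarrow> (nat \<Rightarrow> nat set) \<Rightarrow> nat \<Rightarrow> nat" where
  "load n a r = card {i \<in> {1..n}. r \<in> a i}"

definition sys_cost :: "nat \<Rightarrow> (nat \<Rightarrow> nat \<Rightarrow> real) \<Rightarrow> nat set \<Rightarrow> (nat \<Rightarrow> real) \<Rightarrow> (nat \<Rightarrow> nat)
    \<Rightarrow> (nat \<Rightarrow> nat set) \<Rightarrow> real" where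
  "sys_cost n c R v tau a = (\<Sum>r\<in>R. v r * ext0 n (c (tau r)) (load n a r))"

definition agent_cost :: "nat \<Rightarrow> (nat \<Rightarrow> nat \<Rightarrow> real) \<Rightarrow> (nat \<Rightarrow> real) \<Rightarrow> (nat \<Rightarrow> nat)
    \<Rightarrow> (nat \<Rightarrow> nat set) \<Rightarrow> nat \<Rightarrow> real" where
  "agent_cost n f v tau a i = (\<Sum>r\<in>a i. v r * ext0 n (f (tau r)) (load n a r))"

definition is_NE :: "nat \<Rightarrow> (nat \<Rightarrow> nat \<Rightarrow> real) \<Rightarrow> (nat \<Rightarrow> real) \<Rightarrow> (nat \<Rightarrow> nat)
    \<Rightarrow> (nat \<Rightarrow> nat set set) \<Rightarrow> (nat \<Rightarrow> nat set) \<Rightarrow> bool" where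
  "is_NE n f v tau A a \<longleftrightarrow> a \<in> actions n A \<and>
     (\<forall>i\<in>{1..n}. \<forall>ai\<in>A i. agent_cost n f v tau a i \<le> agent_cost n f v tau (a(i := ai)) i)"

text \<open>PoA of a single game, in the extended reals (max over NE of C / min C; -infinity if no NE,
  so such games do not contribute to the supremum over the class).\<close>
definition PoA_game :: "nat \<Rightarrow> (nat \<Rightarrow> nat \<Rightarrow> real) \<Rightarrow> (nat \<Rightarrow> nat \<Rightarrow> real) \<Rightarrow> nat set
    \<Rightarrow> (nat \<Rightarrow> real) \<Rightarrow> (nat \<Rightarrow> nat) \<Rightarrow> (nat \<Rightarrow> nat set set) \<Rightarrow> ereal" where
  "PoA_game n c f R v tau A =
     Sup {ereal (sys_cost n c R v tau a) / (INF b\<in>actions n A. ereal (sys_cost n c R v tau b)) | a.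
          is_NE n f v tau A a}"

definition PoA_class :: "nat \<Rightarrow> nat \<Rightarrow> (nat \<Rightarrow> nat \<Rightarrow> real) \<Rightarrow> (nat \<Rightarrow> nat \<Rightarrow> real) \<Rightarrow> ereal" where
  "PoA_class n m c f = Sup {PoA_game n c f R v tau A | R v tau A. valid_game n m R v tau A}"

end

theory Submission
  imports Defs "HOL-Number_Theory.Cong"
begin
lemma feasD:
  assumes "lp_feasible n c f \<rho>" "(x,y,z) \<in> IRset n"
  shows "ext0 n c y - \<rho> * ext0 n c x + real (x - z) * ext0 n f x - real (y - z) * ext0 n f (x + 1) \<ge> 0"
  using assms unfolding lp_feasible_def by auto

lemma IR_x00: "1 \<le> x \<Longrightarrow> x \<le> n \<Longrightarrow> (x,0,0) \<in> IRset n"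
  by (auto simp: IRset_def Iset_def)
lemma IR_0y0: "1 \<le> y \<Longrightarrow> y \<le> n \<Longrightarrow> (0,y,0) \<in> IRset n"
  by (auto simp: IRset_def Iset_def)
lemma IR_xxx: "1 \<le> x \<Longrightarrow> x \<le> n \<Longrightarrow> (x,x,x) \<in> IRset n"
  by (auto simp: IRset_def Iset_def)
lemma IR_x10: "1 \<le> x \<Longrightarrow> x + 1 \<le> n \<Longrightarrow> (x,1,0) \<in> IRset n"
  by (auto simp: IRset_def Iset_def)

lemma ext0_in[simp]: "1 \<le> x \<Longrightarrow> x \<le> n \<Longrightarrow> ext0 n g x = g x"
  by (simp add: ext0_def)
lemma ext0_0[simp]: "ext0 n g 0 = 0"
  by (simp add: ext0_def)

lemma feas_one_linear:
  assumes F: "lp_feasible n c f 1" and k: "1 \<le> k" "k \<le> n"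
  shows "c k = real k * c 1 \<and> f k = c 1"
  using k
proof (induction k rule: nat_induct_at_least)
  case base
  have "n \<ge> 1" using base by simp
  have a: "f 1 \<ge> c 1" using feasD[OF F IR_x00[of 1 n]] base by simp
  have b: "c 1 \<ge> f 1" using feasD[OF F IR_0y0[of 1 n]] base by simp
  show ?case using a b by simp
next
  case (Suc k)
  then have IH: "c k = real k * c 1" "f k = c 1" by auto
  have h1: "c 1 - c k + real k * f k - f (k+1) \<ge> 0"
    using feasD[OF F IR_x10[of k n]] Suc by simp
  have h2: "c (k+1) - real (k+1) * f 1 \<ge> 0"
    using feasD[OF F IR_0y0[of "k+1" n]] Suc by simp
  have f1a: "f 1 \<ge> c 1" using feasD[OF F IR_x00[of 1 n]] Suc by simp
  have f1b: "c 1 \<ge> f 1" using feasD[OF F IR_0y0[of 1 n]] Suc by simp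
  have f1: "f 1 = c 1" using f1a f1b by simp
  have h3: "- c (k+1) + real (k+1) * f (k+1) \<ge> 0"
    using feasD[OF F IR_x00[of "k+1" n]] Suc by simp
  have eq: "c 1 - c k + real k * f k - f (k+1) = c 1 - f (k+1)" using IH by simp
  have A: "f (k+1) \<le> c 1" using h1 eq by linarith
  have B: "c (k+1) \<ge> real (k+1) * c 1" using h2 f1 by simp
  have C: "c (k+1) \<le> real (k+1) * f (k+1)" using h3 by simp
  have D: "real (k+1) * f (k+1) \<le> real (k+1) * c 1" using A by (intro mult_left_mono) auto
  have E: "c (k+1) = real (k+1) * c 1" using B C D by linarith
  have "real (k+1) * f (k+1) \<ge> real (k+1) * c 1" using C E by linarith
  then have G: "f (k+1) \<ge> c 1" by (rule mult_left_le_imp_le) simp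
  have X: "c (k+1) = real (k+1) * c 1 \<and> f (k+1) = c 1" using A E G by linarith
  then show ?case by (metis Suc_eq_plus1)
qed

lemma opt_c_nonneg:
  assumes O: "lp_optimal n c f \<rho>" and x: "1 \<le> x" "x \<le> n"
  shows "c x \<ge> 0"
proof (rule ccontr)
  assume neg: "\<not> c x \<ge> 0"
  have F: "lp_feasible n c f \<rho>" and M: "\<And>f' \<rho>'. lp_feasible n c f' \<rho>' \<Longrightarrow> \<rho>' \<le> \<rho>"
    using O unfolding lp_optimal_def by auto
  have r1: "\<rho> \<ge> 1"
  proof -
    have "c x - \<rho> * c x \<ge> 0" using feasD[OF F IR_xxx[OF x]] x by simp
    then have h: "(1 - \<rho>) * c x \<ge> 0" by (simp add: algebra_simps)
    show ?thesis
    proof (rule ccontr)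
      assume "\<not> \<rho> \<ge> 1"
      then have "1 - \<rho> > 0" by simp
      moreover have "c x < 0" using neg by simp
      ultimately have "(1 - \<rho>) * c x < 0" by (rule mult_pos_neg)
      with h show False by simp
    qed
  qed
  show False
  proof (cases "\<exists>j\<in>{1..n}. c j > 0")
    case True
    then obtain j where j: "1 \<le> j" "j \<le> n" "c j > 0" by auto
    have "c j - \<rho> * c j \<ge> 0" using feasD[OF F IR_xxx[of j n]] j by simp
    then have h: "(1 - \<rho>) * c j \<ge> 0" by (simp add: algebra_simps)
    have "\<rho> \<le> 1"
    proof (rule ccontr)
      assume "\<not> \<rho> \<le> 1"
      then have "1 - \<rho> < 0" by simp
      then have "(1 - \<rho>) * c j < 0" using j(3) by (rule mult_neg_pos)
      with h show False by simp
    qed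
    with r1 have "\<rho> = 1" by simp
    with F have F1: "lp_feasible n c f 1" by simp
    have "c x = real x * c 1" using conjunct1[OF feas_one_linear[OF F1 x]] .
    have "c j = real j * c 1" using conjunct1[OF feas_one_linear[OF F1 j(1) j(2)]] .
    have "c 1 < 0"
    proof (rule ccontr)
      assume "\<not> c 1 < 0"
      then have "real x * c 1 \<ge> 0" by (intro mult_nonneg_nonneg) auto
      with \<open>c x = real x * c 1\<close> neg show False by simp
    qed
    then have "real j * c 1 < 0" using j mult_pos_neg[of "real j" "c 1"] by simp
    then have "c j < 0" using \<open>c j = real j * c 1\<close> by simp
    with j show False by simp
  next
    case False
    have "lp_feasible n c f (\<rho> + 1)"
      unfolding lp_feasible_def
    proof (clarify)
      fix a b d assume ab: "(a,b,d) \<in> IRset n"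
      have h: "ext0 n c b - \<rho> * ext0 n c a + real (a - d) * ext0 n f a - real (b - d) * ext0 n f (a + 1) \<ge> 0"
        using feasD[OF F ab] .
      have "ext0 n c a \<le> 0" using False by (auto simp: ext0_def not_less)
      then show "0 \<le> ext0 n c b - (\<rho> + 1) * ext0 n c a + real (a - d) * ext0 n f a - real (b - d) * ext0 n f (a + 1)"
        using h by (simp add: algebra_simps)
    qed
    then have "\<rho> + 1 \<le> \<rho>" using M by blast
    then show False by simp
  qed
qed

lemma opt_rho_nonneg:
  assumes O: "lp_optimal n c f \<rho>"
  shows "\<rho> \<ge> 0"
proof -
  have "lp_feasible n c (\<lambda>_. 0) 0"
    unfolding lp_feasible_def
  proof (clarify)
    fix a b d assume ab: "(a,b,d) \<in> IRset n"
    show "0 \<le> ext0 n c b - 0 * ext0 n c a + real (a - d) * ext0 n (\<lambda>_. 0) a - real (b - d) * ext0 n (\<lambda>_. 0) (a + 1)"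
      using opt_c_nonneg[OF O] by (auto simp: ext0_def)
  qed
  then show ?thesis using O unfolding lp_optimal_def by blast
qed

lemma opt_f_nonneg:
  assumes O: "lp_optimal n c f \<rho>" and x: "1 \<le> x" "x \<le> n"
  shows "f x \<ge> 0"
proof -
  have F: "lp_feasible n c f \<rho>" using O unfolding lp_optimal_def by auto
  have "- \<rho> * c x + real x * f x \<ge> 0" using feasD[OF F IR_x00[OF x]] x by simp
  moreover have "\<rho> * c x \<ge> 0" using opt_c_nonneg[OF O x] opt_rho_nonneg[OF O] by simp
  ultimately have "real x * f x \<ge> 0" by linarith
  with x show ?thesis by (simp add: zero_le_mult_iff)
qed

lemma feas_full:
  assumes F: "lp_feasible n c f \<rho>" and zx: "z \<le> x" and zy: "z \<le> y" and s: "x + y - z \<le> n"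
  shows "ext0 n c y - \<rho> * ext0 n c x + real (x - z) * ext0 n f x - real (y - z) * ext0 n f (x + 1) \<ge> 0"
proof (cases "x = 0 \<and> y = 0")
  case True
  then show ?thesis using zx by simp
next
  case False
  define lo where "lo = (if x + y \<le> n then 0 else x + y - n)"
  define hi where "hi = min x y"
  have lo_le: "lo \<le> z" using s zx zy by (auto simp: lo_def)
  have z_hi: "z \<le> hi" using zx zy by (simp add: hi_def)
  have lox: "lo \<le> x" "lo \<le> y" using lo_le zx zy by auto
  have hix: "hi \<le> x" "hi \<le> y" by (auto simp: hi_def)
  have Ilo: "(x, y, lo) \<in> IRset n"
    using False s zx zy by (auto simp: IRset_def Iset_def lo_def)
  have Ihi: "(x, y, hi) \<in> IRset n"
    using False s zx zy by (auto simp: IRset_def Iset_def hi_def min_def)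
  define H where "H = (\<lambda>w::real. ext0 n c y - \<rho> * ext0 n c x + (real x - w) * ext0 n f x - (real y - w) * ext0 n f (x + 1))"
  have Hlo: "H (real lo) \<ge> 0" using feasD[OF F Ilo] lox by (simp add: H_def of_nat_diff)
  have Hhi: "H (real hi) \<ge> 0" using feasD[OF F Ihi] hix by (simp add: H_def of_nat_diff)
  have goal: "H (real z) \<ge> 0"
  proof (cases "lo = hi")
    case True
    then have "z = lo" using lo_le z_hi by simp
    then show ?thesis using Hlo by simp
  next
    case False
    then have pos: "real hi - real lo > 0" using lo_le z_hi by simp
    have id: "(real hi - real lo) * H (real z) = (real hi - real z) * H (real lo) + (real z - real lo) * H (real hi)"
      unfolding H_def by (simp add: algebra_simps)
    have "(real hi - real z) * H (real lo) \<ge> 0" using Hlo z_hi by simp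
    moreover have "(real z - real lo) * H (real hi) \<ge> 0" using Hhi lo_le by simp
    ultimately have "(real hi - real lo) * H (real z) \<ge> 0" using id by simp
    then show ?thesis using pos by (simp add: zero_le_mult_iff)
  qed
  then show ?thesis using zx zy by (simp add: H_def of_nat_diff)
qed

lemma swap_card:
  assumes "finite R" "finite N" "\<And>i. i \<in> N \<Longrightarrow> S i \<subseteq> R"
  shows "(\<Sum>i\<in>N. \<Sum>r\<in>S i. h r) = (\<Sum>r\<in>R. h r * real (card {i\<in>N. r \<in> S i}))"
proof -
  have "(\<Sum>i\<in>N. \<Sum>r\<in>S i. h r) = (\<Sum>i\<in>N. \<Sum>r\<in>R. if r \<in> S i then h r else 0)"
  proof (rule sum.cong[OF refl])
    fix i assume "i \<in> N"
    then have "S i \<subseteq> R" using assms by auto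
    then have "S i = R \<inter> S i" by auto
    then show "(\<Sum>r\<in>S i. h r) = (\<Sum>r\<in>R. if r \<in> S i then h r else 0)"
      using sum.inter_restrict[OF assms(1), of h "S i"] by simp
  qed
  also have "\<dots> = (\<Sum>r\<in>R. \<Sum>i\<in>N. if r \<in> S i then h r else 0)"
    by (rule sum.swap)
  also have "\<dots> = (\<Sum>r\<in>R. h r * real (card {i\<in>N. r \<in> S i}))"
  proof (rule sum.cong[OF refl])
    fix r
    have "(\<Sum>i\<in>N. if r \<in> S i then h r else 0) = (\<Sum>i\<in>{i\<in>N. r \<in> S i}. h r)"
      using sum.inter_filter[OF assms(2), of "\<lambda>_. h r" "\<lambda>i. r \<in> S i"] by simp
    also have "\<dots> = h r * real (card {i\<in>N. r \<in> S i})" by simp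
    finally show "(\<Sum>i\<in>N. if r \<in> S i then h r else 0) = h r * real (card {i\<in>N. r \<in> S i})" .
  qed
  finally show ?thesis .
qed

lemma load_upd:
  assumes "i \<in> {1..n}" "r \<in> B"
  shows "load n (a(i := B)) r = (if r \<in> a i then load n a r else load n a r + 1)"
proof -
  have e: "{i'\<in>{1..n}. r \<in> (a(i := B)) i'} = insert i {i'\<in>{1..n}. r \<in> a i'}"
    using assms by auto
  show ?thesis
  proof (cases "r \<in> a i")
    case True
    then have "insert i {i'\<in>{1..n}. r \<in> a i'} = {i'\<in>{1..n}. r \<in> a i'}" using assms by auto
    then show ?thesis using e True by (simp add: load_def)
  next
    case False
    then have "i \<notin> {i'\<in>{1..n}. r \<in> a i'}" by auto
    then show ?thesis using e False by (simp add: load_def)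
  qed
qed

lemma actions_sub:
  assumes "valid_game n m R v tau A" "b \<in> actions n A" "i \<in> {1..n}"
  shows "b i \<subseteq> R" "b i \<in> A i"
proof -
  show bi: "b i \<in> A i" using assms unfolding actions_def by (auto simp: PiE_def Pi_def)
  have "A i \<subseteq> Pow R" using assms(1,3) unfolding valid_game_def by auto
  with bi show "b i \<subseteq> R" by auto
qed

lemma smooth:
  assumes V: "valid_game n m R v tau A" and NE: "is_NE n f v tau A a" and b: "b \<in> actions n A"
    and Fe: "\<forall>t\<in>{1..m}. lp_feasible n (c t) (f t) (\<rho> t)"
  shows "(\<Sum>r\<in>R. v r * (\<rho> (tau r) * ext0 n (c (tau r)) (load n a r))) \<le> sys_cost n c R v tau b"
proof -
  define N where "N = {1..n::nat}"
  have finR: "finite R" and vpos: "\<And>r. r \<in> R \<Longrightarrow> v r \<ge> 0" and tau: "\<And>r. r \<in> R \<Longrightarrow> tau r \<in> {1..m}"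
    using V unfolding valid_game_def by auto
  have a: "a \<in> actions n A" using NE unfolding is_NE_def by auto
  have aR: "\<And>i. i \<in> N \<Longrightarrow> a i \<subseteq> R" using actions_sub[OF V a] N_def by auto
  have bR: "\<And>i. i \<in> N \<Longrightarrow> b i \<subseteq> R" using actions_sub[OF V b] N_def by auto
  define G where "G = (\<lambda>r k. ext0 n (f (tau r)) k)"
  define X where "X = (\<lambda>r. load n a r)"
  define Y where "Y = (\<lambda>r. load n b r)"
  define Z where "Z = (\<lambda>r. card {i\<in>N. r \<in> a i \<inter> b i})"
  define W where "W = (\<lambda>r. card {i\<in>N. r \<in> b i - a i})"
  have XN: "X r = card {i\<in>N. r \<in> a i}" for r by (simp add: X_def load_def N_def)
  have YN: "Y r = card {i\<in>N. r \<in> b i}" for r by (simp add: Y_def load_def N_def)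
  have YZW: "Y r = Z r + W r" for r
  proof -
    have "{i\<in>N. r \<in> b i} = {i\<in>N. r \<in> a i \<inter> b i} \<union> {i\<in>N. r \<in> b i - a i}" by auto
    moreover have "{i\<in>N. r \<in> a i \<inter> b i} \<inter> {i\<in>N. r \<in> b i - a i} = {}" by auto
    ultimately show ?thesis unfolding YN Z_def W_def
      by (simp add: card_Un_disjoint N_def)
  qed
  have ZX: "Z r \<le> X r" for r unfolding XN Z_def by (rule card_mono) (auto simp: N_def)
  have XYZ: "X r + Y r - Z r \<le> n" for r
  proof -
    have "card {i\<in>N. r \<in> a i} + card {i\<in>N. r \<in> b i} = card ({i\<in>N. r \<in> a i} \<union> {i\<in>N. r \<in> b i}) + card ({i\<in>N. r \<in> a i} \<inter> {i\<in>N. r \<in> b i})"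
      by (rule card_Un_Int) (auto simp: N_def)
    moreover have "{i\<in>N. r \<in> a i} \<inter> {i\<in>N. r \<in> b i} = {i\<in>N. r \<in> a i \<inter> b i}" by auto
    moreover have "card ({i\<in>N. r \<in> a i} \<union> {i\<in>N. r \<in> b i}) \<le> card N"
      by (rule card_mono) (auto simp: N_def)
    ultimately show ?thesis unfolding XN YN Z_def N_def by simp
  qed
  have ne_i: "agent_cost n f v tau a i \<le> agent_cost n f v tau (a(i := b i)) i" if "i \<in> N" for i
    using NE actions_sub[OF V b, of i] that unfolding is_NE_def N_def by auto
  have sumNE: "(\<Sum>i\<in>N. agent_cost n f v tau a i) \<le> (\<Sum>i\<in>N. agent_cost n f v tau (a(i := b i)) i)"
    by (rule sum_mono) (rule ne_i)
  have L: "(\<Sum>i\<in>N. agent_cost n f v tau a i) = (\<Sum>r\<in>R. v r * G r (X r) * real (X r))"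
  proof -
    have "(\<Sum>i\<in>N. agent_cost n f v tau a i) = (\<Sum>i\<in>N. \<Sum>r\<in>a i. v r * G r (X r))"
      by (simp add: agent_cost_def G_def X_def)
    also have "\<dots> = (\<Sum>r\<in>R. v r * G r (X r) * real (card {i\<in>N. r \<in> a i}))"
      by (rule swap_card[OF finR _ aR]) (simp add: N_def)
    finally show ?thesis by (simp add: XN)
  qed
  have Rt: "(\<Sum>i\<in>N. agent_cost n f v tau (a(i := b i)) i)
      = (\<Sum>r\<in>R. v r * G r (X r) * real (Z r)) + (\<Sum>r\<in>R. v r * G r (X r + 1) * real (W r))"
  proof -
    have "(\<Sum>i\<in>N. agent_cost n f v tau (a(i := b i)) i)
        = (\<Sum>i\<in>N. (\<Sum>r\<in>a i \<inter> b i. v r * G r (X r)) + (\<Sum>r\<in>b i - a i. v r * G r (X r + 1)))"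
    proof (rule sum.cong[OF refl])
      fix i assume i: "i \<in> N"
      have fin: "finite (b i)" using bR[OF i] finR by (rule finite_subset)
      have "agent_cost n f v tau (a(i := b i)) i = (\<Sum>r\<in>b i. if r \<in> a i then v r * G r (X r) else v r * G r (X r + 1))"
        unfolding agent_cost_def
        by (rule sum.cong) (use i in \<open>auto simp: load_upd N_def G_def X_def\<close>)
      also have "\<dots> = (\<Sum>r\<in>b i \<inter> {r. r \<in> a i}. v r * G r (X r)) + (\<Sum>r\<in>b i \<inter> - {r. r \<in> a i}. v r * G r (X r + 1))"
        by (rule sum.If_cases[OF fin])
      also have "b i \<inter> {r. r \<in> a i} = a i \<inter> b i" by auto
      also have "b i \<inter> - {r. r \<in> a i} = b i - a i" by auto
      finally show "agent_cost n f v tau (a(i := b i)) i = (\<Sum>r\<in>a i \<inter> b i. v r * G r (X r)) + (\<Sum>r\<in>b i - a i. v r * G r (X r + 1))" .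
    qed
    also have "\<dots> = (\<Sum>i\<in>N. \<Sum>r\<in>a i \<inter> b i. v r * G r (X r)) + (\<Sum>i\<in>N. \<Sum>r\<in>b i - a i. v r * G r (X r + 1))"
      by (rule sum.distrib)
    also have "(\<Sum>i\<in>N. \<Sum>r\<in>a i \<inter> b i. v r * G r (X r)) = (\<Sum>r\<in>R. v r * G r (X r) * real (Z r))"
      unfolding Z_def by (rule swap_card[OF finR]) (use aR in \<open>auto simp: N_def\<close>)
    also have "(\<Sum>i\<in>N. \<Sum>r\<in>b i - a i. v r * G r (X r + 1)) = (\<Sum>r\<in>R. v r * G r (X r + 1) * real (W r))"
      unfolding W_def by (rule swap_card[OF finR]) (use bR in \<open>auto simp: N_def\<close>)
    finally show ?thesis .
  qed
  have per: "v r * (\<rho> (tau r) * ext0 n (c (tau r)) (X r))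
      \<le> v r * ext0 n (c (tau r)) (Y r) + (v r * G r (X r) * real (X r) - v r * G r (X r) * real (Z r))
         - v r * G r (X r + 1) * real (W r)" if r: "r \<in> R" for r
  proof -
    have F: "lp_feasible n (c (tau r)) (f (tau r)) (\<rho> (tau r))" using Fe tau[OF r] by auto
    have ZY: "Z r \<le> Y r" using YZW[of r] by simp
    have h: "ext0 n (c (tau r)) (Y r) - \<rho> (tau r) * ext0 n (c (tau r)) (X r) + real (X r - Z r) * G r (X r)
         - real (Y r - Z r) * G r (X r + 1) \<ge> 0"
      using feas_full[OF F ZX ZY XYZ] by (simp add: G_def)
    have e1: "real (X r - Z r) = real (X r) - real (Z r)" using ZX[of r] by (simp add: of_nat_diff)
    have e2: "real (Y r - Z r) = real (W r)" using YZW[of r] by simp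
    have "0 \<le> v r * (ext0 n (c (tau r)) (Y r) - \<rho> (tau r) * ext0 n (c (tau r)) (X r) + real (X r - Z r) * G r (X r)
         - real (Y r - Z r) * G r (X r + 1))"
      using h vpos[OF r] by simp
    then show ?thesis unfolding e1 e2 by (simp add: algebra_simps)
  qed
  have "(\<Sum>r\<in>R. v r * (\<rho> (tau r) * ext0 n (c (tau r)) (X r)))
      \<le> (\<Sum>r\<in>R. v r * ext0 n (c (tau r)) (Y r) + (v r * G r (X r) * real (X r) - v r * G r (X r) * real (Z r))
         - v r * G r (X r + 1) * real (W r))"
    by (rule sum_mono) (rule per)
  also have "\<dots> = sys_cost n c R v tau b + ((\<Sum>r\<in>R. v r * G r (X r) * real (X r))
      - ((\<Sum>r\<in>R. v r * G r (X r) * real (Z r)) + (\<Sum>r\<in>R. v r * G r (X r + 1) * real (W r))))"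
    by (simp add: sys_cost_def Y_def sum.distrib sum_subtractf algebra_simps)
  also have "\<dots> \<le> sys_cost n c R v tau b"
    using sumNE L Rt by simp
  finally show ?thesis by (simp add: X_def)
qed

lemma one_div_ereal: "1 / ereal r = (if r = 0 then \<infinity> else ereal (1 / r))"
  by (simp add: one_ereal_def)

lemma ext0_nonneg: "(\<forall>x\<in>{1..n}. g x \<ge> 0) \<Longrightarrow> ext0 n g k \<ge> 0"
  by (simp add: ext0_def)

lemma sys_cost_nonneg:
  assumes V: "valid_game n m R v tau A" and cpos: "\<forall>t\<in>{1..m}. \<forall>x\<in>{1..n}. c t x \<ge> 0"
  shows "sys_cost n c R v tau b \<ge> 0"
  unfolding sys_cost_def
proof (rule sum_nonneg)
  fix r assume r: "r \<in> R"
  have "v r \<ge> 0" "tau r \<in> {1..m}" using V r unfolding valid_game_def by auto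
  then show "0 \<le> v r * ext0 n (c (tau r)) (load n b r)"
    using cpos ext0_nonneg by (simp add: ext0_def)
qed

lemma ereal_div_le_aux:
  fixes Q :: ereal
  assumes rm: "rm > 0" and Ca: "Ca \<ge> 0" and lo: "ereal (rm * Ca) \<le> Q" and hi: "Q \<le> ereal Ca"
  shows "ereal Ca / Q \<le> 1 / ereal rm"
proof -
  have "Q \<noteq> \<infinity>" using hi by auto
  moreover have "Q \<noteq> -\<infinity>" using lo by auto
  ultimately obtain q where q: "Q = ereal q" by (cases Q) auto
  have q1: "rm * Ca \<le> q" and q2: "q \<le> Ca" using lo hi q by auto
  have q0: "q \<ge> 0" using q1 rm Ca by (meson mult_nonneg_nonneg order_trans less_imp_le)
  show ?thesis
  proof (cases "q = 0")
    case True
    then have "rm * Ca \<le> 0" using q1 by simp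
    then have "Ca = 0" using rm Ca by (simp add: mult_le_0_iff)
    then show ?thesis using True q rm by simp
  next
    case False
    then have qp: "q > 0" using q0 by simp
    have "Ca / q \<le> 1 / rm"
      using q1 qp rm by (simp add: divide_simps mult.commute)
    moreover have "ereal Ca / Q = ereal (Ca / q)" using q qp by simp
    moreover have "1 / ereal rm = ereal (1 / rm)" using rm by (simp add: one_div_ereal)
    ultimately show ?thesis by simp
  qed
qed

lemma PoA_game_le:
  assumes V: "valid_game n m R v tau A"
    and Opt: "\<forall>t\<in>{1..m}. lp_optimal n (c t) (f t) (\<rho> t)"
    and rm0: "rm \<ge> 0" and rmle: "\<forall>t\<in>{1..m}. rm \<le> \<rho> t"
  shows "PoA_game n c f R v tau A \<le> 1 / ereal rm"
  unfolding PoA_game_def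
proof (rule Sup_least, clarify)
  fix a assume NE: "is_NE n f v tau A a"
  have cpos: "\<forall>t\<in>{1..m}. \<forall>x\<in>{1..n}. c t x \<ge> 0" using Opt opt_c_nonneg by auto
  show "ereal (sys_cost n c R v tau a) / (INF b\<in>actions n A. ereal (sys_cost n c R v tau b)) \<le> 1 / ereal rm"
  proof (cases "rm = 0")
    case True
    have inf: "1 / ereal rm = \<infinity>" using True by (simp add: one_div_ereal)
    show ?thesis by (subst inf) simp
  next
    case False
    then have rmp: "rm > 0" using rm0 by simp
    have a: "a \<in> actions n A" using NE unfolding is_NE_def by auto
    have Fe: "\<forall>t\<in>{1..m}. lp_feasible n (c t) (f t) (\<rho> t)" using Opt unfolding lp_optimal_def by auto
    have finR: "finite R" and vpos: "\<And>r. r \<in> R \<Longrightarrow> v r \<ge> 0" and tau: "\<And>r. r \<in> R \<Longrightarrow> tau r \<in> {1..m}"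
      using V unfolding valid_game_def by auto
    have key: "rm * sys_cost n c R v tau a \<le> sys_cost n c R v tau b" if b: "b \<in> actions n A" for b
    proof -
      have "rm * sys_cost n c R v tau a = (\<Sum>r\<in>R. v r * (rm * ext0 n (c (tau r)) (load n a r)))"
        unfolding sys_cost_def by (simp add: sum_distrib_left algebra_simps)
      also have "\<dots> \<le> (\<Sum>r\<in>R. v r * (\<rho> (tau r) * ext0 n (c (tau r)) (load n a r)))"
      proof (rule sum_mono)
        fix r assume r: "r \<in> R"
        have "ext0 n (c (tau r)) (load n a r) \<ge> 0" using cpos tau[OF r] by (simp add: ext0_def)
        moreover have "rm \<le> \<rho> (tau r)" using rmle tau[OF r] by auto
        ultimately have "rm * ext0 n (c (tau r)) (load n a r) \<le> \<rho> (tau r) * ext0 n (c (tau r)) (load n a r)"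
          by (simp add: mult_right_mono)
        then show "v r * (rm * ext0 n (c (tau r)) (load n a r)) \<le> v r * (\<rho> (tau r) * ext0 n (c (tau r)) (load n a r))"
          using vpos[OF r] by (simp add: mult_left_mono)
      qed
      also have "\<dots> \<le> sys_cost n c R v tau b" by (rule smooth[OF V NE b Fe])
      finally show ?thesis .
    qed
    have lo: "ereal (rm * sys_cost n c R v tau a) \<le> (INF b\<in>actions n A. ereal (sys_cost n c R v tau b))"
      by (rule INF_greatest) (use key in simp)
    have hi: "(INF b\<in>actions n A. ereal (sys_cost n c R v tau b)) \<le> ereal (sys_cost n c R v tau a)"
      by (rule INF_lower[OF a])
    show ?thesis by (rule ereal_div_le_aux[OF rmp sys_cost_nonneg[OF V cpos] lo hi])
  qed
qed

lemma PoA_class_le: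
  assumes Opt: "\<forall>t\<in>{1..m}. lp_optimal n (c t) (f t) (\<rho> t)"
    and rm0: "rm \<ge> 0" and rmle: "\<forall>t\<in>{1..m}. rm \<le> \<rho> t"
  shows "PoA_class n m c f \<le> 1 / ereal rm"
  unfolding PoA_class_def
  by (rule Sup_least) (use PoA_game_le[OF _ Opt rm0 rmle] in blast)

definition trC :: "nat \<Rightarrow> (nat \<Rightarrow> real) \<Rightarrow> nat \<times> nat \<times> nat \<Rightarrow> real" where
  "trC n c t = ext0 n c (fst t)"
definition trD :: "nat \<Rightarrow> (nat \<Rightarrow> real) \<Rightarrow> nat \<times> nat \<times> nat \<Rightarrow> real" where
  "trD n c t = ext0 n c (fst (snd t))"
definition trE :: "nat \<Rightarrow> (nat \<Rightarrow> real) \<Rightarrow> nat \<times> nat \<times> nat \<Rightarrow> real" where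
  "trE n g t = real (fst (snd t) - snd (snd t)) * ext0 n g (fst t + 1) - real (fst t - snd (snd t)) * ext0 n g (fst t)"

lemma finite_IR: "finite (IRset n)"
proof (rule finite_subset)
  show "IRset n \<subseteq> {0..n} \<times> {0..n} \<times> {0..n}"
    by (auto simp: IRset_def Iset_def)
qed simp

lemma minsel:
  fixes \<alpha> \<beta> :: "'i \<Rightarrow> real"
  assumes "finite I" and h: "\<And>i. i \<in> I \<Longrightarrow> \<beta> i \<ge> 0 \<and> (\<beta> i > 0 \<longrightarrow> \<alpha> i > \<rho> * \<beta> i) \<and> (\<beta> i = 0 \<longrightarrow> \<alpha> i \<ge> 0)"
  shows "\<exists>\<rho>'>\<rho>. \<forall>i\<in>I. \<rho>' * \<beta> i \<le> \<alpha> i"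
proof -
  define K where "K = insert (\<rho> + 1) ((\<lambda>i. \<alpha> i / \<beta> i) ` {i\<in>I. \<beta> i > 0})"
  have fK: "finite K" "K \<noteq> {}" using assms(1) by (auto simp: K_def)
  have gt: "\<forall>k\<in>K. k > \<rho>"
  proof
    fix k assume "k \<in> K"
    then consider "k = \<rho> + 1" | i where "i \<in> I" "\<beta> i > 0" "k = \<alpha> i / \<beta> i" by (auto simp: K_def)
    then show "k > \<rho>"
    proof cases
      case 2
      then have "\<alpha> i > \<rho> * \<beta> i" using h by auto
      then show ?thesis using 2 by (simp add: less_divide_eq)
    qed simp
  qed
  define \<rho>' where "\<rho>' = Min K"
  have "\<rho>' > \<rho>" unfolding \<rho>'_def using fK gt by simp
  moreover have "\<forall>i\<in>I. \<rho>' * \<beta> i \<le> \<alpha> i"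
  proof
    fix i assume i: "i \<in> I"
    show "\<rho>' * \<beta> i \<le> \<alpha> i"
    proof (cases "\<beta> i > 0")
      case True
      then have "\<alpha> i / \<beta> i \<in> K" using i by (auto simp: K_def)
      then have "\<rho>' \<le> \<alpha> i / \<beta> i" unfolding \<rho>'_def using fK by simp
      then show ?thesis using True by (simp add: le_divide_eq)
    next
      case False
      then have "\<beta> i = 0" using h[OF i] by simp
      then show ?thesis using h[OF i] by simp
    qed
  qed
  ultimately show ?thesis by blast
qed

lemma sandwich:
  fixes L U :: "real set"
  assumes "finite L" "finite U" "\<And>l u. l \<in> L \<Longrightarrow> u \<in> U \<Longrightarrow> l \<le> u"
  shows "\<exists>\<nu>. (\<forall>l\<in>L. l \<le> \<nu>) \<and> (\<forall>u\<in>U. \<nu> \<le> u)"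
proof (cases "L = {}")
  case True
  show ?thesis
  proof (cases "U = {}")
    case True
    with \<open>L = {}\<close> show ?thesis by simp
  next
    case False
    then show ?thesis using \<open>L = {}\<close> assms(2) by (intro exI[of _ "Min U"]) simp
  qed
next
  case False
  then have "Max L \<in> L" using assms(1) by simp
  then show ?thesis using assms False by (intro exI[of _ "Max L"]) simp
qed

lemma ext0_scale: "ext0 n (\<lambda>k. \<nu> * g k) k = \<nu> * ext0 n g k"
  by (simp add: ext0_def)

lemma dual:
  assumes O: "lp_optimal n c f \<rho>"
  shows "\<exists>s\<in>IRset n. \<exists>t\<in>IRset n. \<exists>\<theta>1 \<theta>2. \<theta>1 \<ge> 0 \<and> \<theta>2 \<ge> 0
     \<and> \<theta>1 * trE n g s + \<theta>2 * trE n g t \<ge> 0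
     \<and> \<theta>1 * trC n c s + \<theta>2 * trC n c t > 0
     \<and> \<theta>1 * trD n c s + \<theta>2 * trD n c t \<le> \<rho> * (\<theta>1 * trC n c s + \<theta>2 * trC n c t)"
proof (rule ccontr)
  assume H0: "\<not> ?thesis"
  define S where "S = IRset n"
  define C where "C = trC n c"
  define D where "D = trD n c"
  define E where "E = trE n g"
  have H: "\<theta>1 * D s + \<theta>2 * D t > \<rho> * (\<theta>1 * C s + \<theta>2 * C t)"
    if "s \<in> S" "t \<in> S" "\<theta>1 \<ge> 0" "\<theta>2 \<ge> 0" "\<theta>1 * E s + \<theta>2 * E t \<ge> 0" "\<theta>1 * C s + \<theta>2 * C t > 0"
    for s t \<theta>1 \<theta>2
  proof (rule ccontr)
    assume "\<not> ?thesis"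
    then have "\<theta>1 * D s + \<theta>2 * D t \<le> \<rho> * (\<theta>1 * C s + \<theta>2 * C t)" by simp
    with that have "\<exists>s\<in>IRset n. \<exists>t\<in>IRset n. \<exists>\<theta>1 \<theta>2. \<theta>1 \<ge> 0 \<and> \<theta>2 \<ge> 0
     \<and> \<theta>1 * trE n g s + \<theta>2 * trE n g t \<ge> 0
     \<and> \<theta>1 * trC n c s + \<theta>2 * trC n c t > 0
     \<and> \<theta>1 * trD n c s + \<theta>2 * trD n c t \<le> \<rho> * (\<theta>1 * trC n c s + \<theta>2 * trC n c t)"
      unfolding S_def C_def D_def E_def by blast
    with H0 show False by blast
  qed
  have cnn: "\<forall>x\<in>{1..n}. c x \<ge> 0" using opt_c_nonneg[OF O] by auto
  have C0: "C t \<ge> 0" for t unfolding C_def trC_def using cnn by (simp add: ext0_def)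
  have D0: "D t \<ge> 0" for t unfolding D_def trD_def using cnn by (simp add: ext0_def)
  define \<alpha> where "\<alpha> = (\<lambda>(s,t). if E s < 0 \<and> E t > 0 then D s * E t + D t * (- E s)
      else if s = t \<and> E t \<ge> 0 then D t else 0)"
  define \<beta> where "\<beta> = (\<lambda>(s,t). if E s < 0 \<and> E t > 0 then C s * E t + C t * (- E s)
      else if s = t \<and> E t \<ge> 0 then C t else 0)"
  have cond: "\<beta> p \<ge> 0 \<and> (\<beta> p > 0 \<longrightarrow> \<alpha> p > \<rho> * \<beta> p) \<and> (\<beta> p = 0 \<longrightarrow> \<alpha> p \<ge> 0)" if p: "p \<in> S \<times> S" for p
  proof -
    obtain s t where st: "p = (s,t)" "s \<in> S" "t \<in> S" using p by auto
    show ?thesis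
    proof (cases "E s < 0 \<and> E t > 0")
      case True
      have ab: "\<alpha> p = D s * E t + D t * (- E s)" "\<beta> p = C s * E t + C t * (- E s)"
        using True st by (auto simp: \<alpha>_def \<beta>_def)
      have "C s * E t \<ge> 0" using True C0[of s] by simp
      moreover have "C t * E s \<le> 0" using True C0[of t] by (intro mult_nonneg_nonpos) auto
      ultimately have b0: "\<beta> p \<ge> 0" using ab by linarith
      have "D s * E t \<ge> 0" using True D0[of s] by simp
      moreover have "D t * E s \<le> 0" using True D0[of t] by (intro mult_nonneg_nonpos) auto
      ultimately have a0: "\<alpha> p \<ge> 0" using ab by linarith
      have "\<beta> p > 0 \<longrightarrow> \<alpha> p > \<rho> * \<beta> p"
      proof
        assume bp: "\<beta> p > 0"
        have "E t * D s + (- E s) * D t > \<rho> * (E t * C s + (- E s) * C t)"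
          by (rule H) (use st True bp ab in \<open>auto simp: algebra_simps\<close>)
        moreover have "\<rho> * \<beta> p = \<rho> * (E t * C s + (- E s) * C t)" unfolding ab(2) by (simp add: algebra_simps)
        moreover have "\<alpha> p = E t * D s + (- E s) * D t" using ab by (simp add: algebra_simps)
        ultimately show "\<alpha> p > \<rho> * \<beta> p" by linarith
      qed
      then show ?thesis using a0 b0 by simp
    next
      case False
      show ?thesis
      proof (cases "s = t \<and> E t \<ge> 0")
        case True
        have ab: "\<alpha> p = D t" "\<beta> p = C t" using True False st by (auto simp: \<alpha>_def \<beta>_def)
        have "C t > 0 \<longrightarrow> D t > \<rho> * C t"
        proof
          assume "C t > 0"
          then have "1 * D t + 0 * D t > \<rho> * (1 * C t + 0 * C t)"
            by (intro H) (use st True in auto)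
          then show "D t > \<rho> * C t" by simp
        qed
        then show ?thesis using ab C0[of t] D0[of t] by simp
      next
        case False2: False
        have "\<alpha> p = 0" "\<beta> p = 0" using False False2 st by (auto simp: \<alpha>_def \<beta>_def)
        then show ?thesis by simp
      qed
    qed
  qed
  have finS: "finite S" unfolding S_def by (rule finite_IR)
  obtain \<rho>' where r': "\<rho>' > \<rho>" and r'le: "\<forall>p\<in>S \<times> S. \<rho>' * \<beta> p \<le> \<alpha> p"
    using minsel[of "S \<times> S" \<beta> \<rho> \<alpha>] finS cond by blast
  define L where "L = (\<lambda>s. (\<rho>' * C s - D s) / (- E s)) ` {s\<in>S. E s < 0}"
  define U where "U = (\<lambda>t. (D t - \<rho>' * C t) / E t) ` {t\<in>S. E t > 0}"
  have LU: "l \<le> u" if lL: "l \<in> L" and uU: "u \<in> U" for l u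
  proof -
    obtain s where s: "s \<in> S" "E s < 0" "l = (\<rho>' * C s - D s) / (- E s)" using lL unfolding L_def by blast
    obtain t where t: "t \<in> S" "E t > 0" "u = (D t - \<rho>' * C t) / E t" using uU unfolding U_def by blast
    have "\<rho>' * \<beta> (s,t) \<le> \<alpha> (s,t)" using r'le s t by auto
    then have k: "\<rho>' * (C s * E t + C t * (- E s)) \<le> D s * E t + D t * (- E s)"
      using s t by (simp add: \<alpha>_def \<beta>_def)
    have es: "- E s > 0" using s by simp
    have "(\<rho>' * C s - D s) * E t \<le> (D t - \<rho>' * C t) * (- E s)"
      using k by (simp add: algebra_simps)
    then have k2: "(\<rho>' * C s - D s) * E t \<le> (D t - \<rho>' * C t) * (- E s)" .
    have l1: "l * (- E s) = \<rho>' * C s - D s" using s es by simp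
    have u1: "u * E t = D t - \<rho>' * C t" using t by simp
    have "l * ((- E s) * E t) = (\<rho>' * C s - D s) * E t" using l1 by (simp add: algebra_simps)
    also have "\<dots> \<le> (D t - \<rho>' * C t) * (- E s)" by (rule k2)
    also have "\<dots> = u * ((- E s) * E t)" unfolding u1[symmetric] by (simp add: algebra_simps)
    finally have "l * ((- E s) * E t) \<le> u * ((- E s) * E t)" .
    moreover have "(- E s) * E t > 0" using es t(2) by (rule mult_pos_pos)
    ultimately show ?thesis by (rule mult_right_le_imp_le)
  qed
  obtain \<nu> where nu: "\<forall>l\<in>L. l \<le> \<nu>" "\<forall>u\<in>U. \<nu> \<le> u"
    using sandwich[of L U] LU finS by (auto simp: L_def U_def)
  have "lp_feasible n c (\<lambda>k. \<nu> * g k) \<rho>'"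
    unfolding lp_feasible_def
  proof (clarify)
    fix x y z assume xyz: "(x, y, z) \<in> IRset n"
    define t where "t = (x, y, z)"
    have tS: "t \<in> S" using xyz by (simp add: t_def S_def)
    have eq: "ext0 n c y - \<rho>' * ext0 n c x + real (x - z) * ext0 n (\<lambda>k. \<nu> * g k) x
        - real (y - z) * ext0 n (\<lambda>k. \<nu> * g k) (x + 1) = D t - \<rho>' * C t - \<nu> * E t"
      by (simp add: t_def C_def D_def E_def trC_def trD_def trE_def ext0_scale algebra_simps)
    have "D t - \<rho>' * C t - \<nu> * E t \<ge> 0"
    proof (cases "E t < 0")
      case True
      then have "(\<rho>' * C t - D t) / (- E t) \<in> L" using tS by (auto simp: L_def)
      then have "(\<rho>' * C t - D t) / (- E t) \<le> \<nu>" using nu by auto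
      moreover have pos: "- E t > 0" using True by simp
      ultimately have "\<rho>' * C t - D t \<le> \<nu> * (- E t)" by (simp only: pos_divide_le_eq[OF pos])
      then show ?thesis by (simp add: algebra_simps)
    next
      case False
      show ?thesis
      proof (cases "E t > 0")
        case True
        then have "(D t - \<rho>' * C t) / E t \<in> U" using tS by (auto simp: U_def)
        then have "\<nu> \<le> (D t - \<rho>' * C t) / E t" using nu by auto
        then have "\<nu> * E t \<le> D t - \<rho>' * C t" by (simp only: pos_le_divide_eq[OF True])
        then show ?thesis by (simp add: algebra_simps)
      next
        case False2: False
        then have E0: "E t = 0" using False by simp
        have "\<rho>' * \<beta> (t,t) \<le> \<alpha> (t,t)" using r'le tS by auto
        then have "\<rho>' * C t \<le> D t" using E0 by (simp add: \<alpha>_def \<beta>_def)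
        then show ?thesis using E0 by simp
      qed
    qed
    then show "0 \<le> ext0 n c y - \<rho>' * ext0 n c x + real (x - z) * ext0 n (\<lambda>k. \<nu> * g k) x
        - real (y - z) * ext0 n (\<lambda>k. \<nu> * g k) (x + 1)" using eq by simp
  qed
  then have "\<rho>' \<le> \<rho>" using O unfolding lp_optimal_def by blast
  with r' show False by simp
qed

lemma bij_rot: "bij_betw (\<lambda>w. (u + w) mod n) {..<n} {..<(n::nat)}"
proof -
  have inj: "inj_on (\<lambda>w. (u + w) mod n) {..<n}"
  proof (rule inj_onI)
    fix w w' assume w: "w \<in> {..<n}" "w' \<in> {..<n}" and e: "(u + w) mod n = (u + w') mod n"
    then have "[u + w = u + w'] (mod n)" by (simp add: cong_def)
    then have "[w = w'] (mod n)" by (simp add: cong_add_lcancel_nat)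
    then show "w = w'" using w by (simp add: cong_def)
  qed
  have sub: "(\<lambda>w. (u + w) mod n) ` {..<n} \<subseteq> {..<n}"
  proof
    fix p assume "p \<in> (\<lambda>w. (u + w) mod n) ` {..<n}"
    then obtain w where "w < n" "p = (u + w) mod n" by auto
    then show "p \<in> {..<n}" by simp
  qed
  have "(\<lambda>w. (u + w) mod n) ` {..<n} = {..<n}"
    by (rule endo_inj_surj[OF _ sub inj]) simp
  then show ?thesis using inj by (simp add: bij_betw_def)
qed

lemma bij_agents:
  assumes "n \<ge> 1"
  shows "bij_betw (\<lambda>i. (i - 1 + r) mod n) {1..n} {..<(n::nat)}"
proof -
  have b1: "bij_betw (\<lambda>i. i - 1) {1..n} {..<n}"
  proof (rule bij_betwI[where g = Suc])
    show "(\<lambda>i. i - 1) \<in> {1..n} \<rightarrow> {..<n}" by auto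
    show "Suc \<in> {..<n} \<rightarrow> {1..n}" by auto
  qed auto
  have b2: "bij_betw (\<lambda>w. (r + w) mod n) {..<n} {..<n}" by (rule bij_rot)
  have "bij_betw ((\<lambda>w. (r + w) mod n) \<circ> (\<lambda>i. i - 1)) {1..n} {..<n}"
    by (rule bij_betw_trans[OF b1 b2])
  moreover have "((\<lambda>w. (r + w) mod n) \<circ> (\<lambda>i. i - 1)) = (\<lambda>i. (i - 1 + r) mod n)"
    by (auto simp: add.commute)
  ultimately show ?thesis by simp
qed

lemma card_bij_pred:
  assumes b: "bij_betw h A B"
  shows "card {a\<in>A. P (h a)} = card {b\<in>B. P b}"
proof -
  have "h ` {a\<in>A. P (h a)} = {b\<in>B. P b}"
  proof
    show "h ` {a\<in>A. P (h a)} \<subseteq> {b\<in>B. P b}" using b by (auto simp: bij_betw_def)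
    show "{b\<in>B. P b} \<subseteq> h ` {a\<in>A. P (h a)}"
    proof
      fix y assume y: "y \<in> {b\<in>B. P b}"
      then have "y \<in> h ` A" using b by (simp add: bij_betw_def)
      then obtain a where "a \<in> A" "y = h a" by auto
      with y show "y \<in> h ` {a\<in>A. P (h a)}" by auto
    qed
  qed
  moreover have "bij_betw h {a\<in>A. P (h a)} (h ` {a\<in>A. P (h a)})"
    using b by (intro inj_on_imp_bij_betw) (auto simp: bij_betw_def inj_on_def)
  ultimately show ?thesis by (metis bij_betw_same_card)
qed

lemma sum_rot:
  assumes n: "n \<ge> 1"
  shows "(\<Sum>r\<in>{..<2*n}. F (r div n) ((u + r) mod n)) = (\<Sum>p<n. F 0 p) + (\<Sum>p<n. F (1::nat) p)"
proof -
  have split: "{..<2*n} = {..<n} \<union> (\<lambda>w. w + n) ` {..<n}"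
  proof
    show "{..<2*n} \<subseteq> {..<n} \<union> (\<lambda>w. w + n) ` {..<n}"
    proof
      fix r assume r: "r \<in> {..<2*n}"
      show "r \<in> {..<n} \<union> (\<lambda>w. w + n) ` {..<n}"
      proof (cases "r < n")
        case False
        then have "r = (r - n) + n" "r - n < n" using r by auto
        then show ?thesis by blast
      qed simp
    qed
  qed auto
  have disj: "{..<n} \<inter> (\<lambda>w. w + n) ` {..<n} = {}" by auto
  have "(\<Sum>r\<in>{..<2*n}. F (r div n) ((u + r) mod n))
      = (\<Sum>r\<in>{..<n}. F (r div n) ((u + r) mod n)) + (\<Sum>r\<in>(\<lambda>w. w + n) ` {..<n}. F (r div n) ((u + r) mod n))"
    unfolding split by (rule sum.union_disjoint) (use disj in auto)
  also have "(\<Sum>r\<in>{..<n}. F (r div n) ((u + r) mod n)) = (\<Sum>r\<in>{..<n}. F 0 ((u + r) mod n))"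
    by (rule sum.cong) auto
  also have "\<dots> = (\<Sum>p<n. F 0 p)"
    by (rule sum.reindex_bij_betw[OF bij_rot])
  also have "(\<Sum>r\<in>(\<lambda>w. w + n) ` {..<n}. F (r div n) ((u + r) mod n)) = (\<Sum>w\<in>{..<n}. F ((w + n) div n) ((u + (w + n)) mod n))"
    by (subst sum.reindex) (auto simp: inj_on_def)
  also have "\<dots> = (\<Sum>w\<in>{..<n}. F 1 ((u + w) mod n))"
  proof (rule sum.cong[OF refl])
    fix w assume "w \<in> {..<n}"
    then have "(w + n) div n = 1" using n by simp
    moreover have "(u + (w + n)) mod n = (u + w) mod n"
      by (metis add.assoc mod_add_self2)
    ultimately show "F ((w + n) div n) ((u + (w + n)) mod n) = F 1 ((u + w) mod n)" by simp
  qed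
  also have "\<dots> = (\<Sum>p<n. F 1 p)"
    by (rule sum.reindex_bij_betw[OF bij_rot])
  finally show ?thesis .
qed

lemma card_lt: "X \<le> n \<Longrightarrow> card {p\<in>{..<n}. p < X} = (X::nat)"
proof -
  assume "X \<le> n"
  then have "{p\<in>{..<n}. p < X} = {..<X}" by auto
  then show ?thesis by simp
qed

lemma card_two: "Z \<le> X \<Longrightarrow> X \<le> W \<Longrightarrow> W \<le> n \<Longrightarrow>
    card {p\<in>{..<n}. p < Z \<or> (X \<le> p \<and> p < W)} = Z + (W - (X::nat))"
proof -
  assume a: "Z \<le> X" "X \<le> W" "W \<le> n"
  then have "{p\<in>{..<n}. p < Z \<or> (X \<le> p \<and> p < W)} = {..<Z} \<union> {X..<W}" by auto
  moreover have "{..<Z} \<inter> {X..<W} = {}" using a by auto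
  ultimately show ?thesis by (simp add: card_Un_disjoint)
qed

lemma sum_ind: "X \<le> n \<Longrightarrow> (\<Sum>p<n. if p < X then (q::real) else 0) = real X * q"
proof -
  assume X: "X \<le> n"
  have "(\<Sum>p<n. if p < X then q else 0) = (\<Sum>p\<in>{p\<in>{..<n}. p < X}. q)"
    by (subst sum.inter_filter) simp_all
  also have "\<dots> = real X * q" using card_lt[OF X] by simp
  finally show ?thesis .
qed

lemma sum_ind2:
  assumes "Z \<le> X" "X \<le> W" "W \<le> n"
  shows "(\<Sum>p<n. if p < Z then (q1::real) else if X \<le> p \<and> p < W then q2 else 0) = real Z * q1 + real (W - X) * q2"
proof -
  have "(\<Sum>p<n. if p < Z then q1 else if X \<le> p \<and> p < W then q2 else 0)
      = (\<Sum>p<n. if p < Z then q1 else 0) + (\<Sum>p<n. if X \<le> p \<and> p < W then q2 else 0)"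
    by (subst sum.distrib[symmetric]) (rule sum.cong, use assms in auto)
  also have "(\<Sum>p<n. if p < Z then q1 else 0) = real Z * q1" using assms by (intro sum_ind) auto
  also have "(\<Sum>p<n. if X \<le> p \<and> p < W then q2 else 0) = (\<Sum>p\<in>{p\<in>{..<n}. X \<le> p \<and> p < W}. q2)"
    by (subst sum.inter_filter) simp_all
  also have "{p\<in>{..<n}. X \<le> p \<and> p < W} = {X..<W}" using assms by auto
  also have "(\<Sum>p\<in>{X..<W}. q2) = real (W - X) * q2" by simp
  finally show ?thesis .
qed

lemma IR_props:
  assumes "s \<in> IRset n"
  shows "snd (snd s) \<le> fst s" "snd (snd s) \<le> fst (snd s)" "fst s + fst (snd s) - snd (snd s) \<le> n"
    "fst s \<le> n" "fst (snd s) \<le> n"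
  using assms by (auto simp: IRset_def Iset_def)

lemma game:
  fixes S :: "nat \<Rightarrow> nat \<times> nat \<times> nat" and \<theta> :: "nat \<Rightarrow> real" and f c :: "nat \<Rightarrow> nat \<Rightarrow> real"
  assumes n1: "n \<ge> 1" and t0: "t0 \<in> {1..m}" and SI: "\<And>k. k < 2 \<Longrightarrow> S k \<in> IRset n"
    and th: "\<And>k. k < 2 \<Longrightarrow> \<theta> k \<ge> 0"
    and NEc: "\<theta> 0 * trE n (f t0) (S 0) + \<theta> 1 * trE n (f t0) (S 1) \<ge> 0"
  shows "\<exists>R v tau A a b. valid_game n m R v tau A \<and> is_NE n f v tau A a \<and> b \<in> actions n A
     \<and> sys_cost n c R v tau a = real n * (\<theta> 0 * trC n (c t0) (S 0) + \<theta> 1 * trC n (c t0) (S 1))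
     \<and> sys_cost n c R v tau b = real n * (\<theta> 0 * trD n (c t0) (S 0) + \<theta> 1 * trD n (c t0) (S 1))"
proof -
  define X where "X k = fst (S k)" for k
  define Y where "Y k = fst (snd (S k))" for k
  define Z where "Z k = snd (snd (S k))" for k
  define W where "W k = X k + Y k - Z k" for k
  have props: "Z k \<le> X k \<and> Z k \<le> Y k \<and> W k \<le> n \<and> X k \<le> W k \<and> X k \<le> n \<and> W k - X k = Y k - Z k"
    if "k < 2" for k
    using IR_props[OF SI[OF that]] unfolding X_def Y_def Z_def W_def by auto
  define R where "R = {..<2*n}"
  define pos where "pos i r = (i - 1 + r) mod n" for i r
  define blk where "blk r = r div n" for r
  define v where "v r = \<theta> (blk r)" for r
  define tau :: "nat \<Rightarrow> nat" where "tau r = t0" for r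
  define as where "as i = {r\<in>R. pos i r < X (blk r)}" for i
  define bs where "bs i = {r\<in>R. pos i r < Z (blk r) \<or> (X (blk r) \<le> pos i r \<and> pos i r < W (blk r))}" for i
  define A where "A i = {as i, bs i}" for i
  define a where "a = restrict as {1..n}"
  define b where "b = restrict bs {1..n}"
  define G where "G = ext0 n (f t0)"
  define Cc where "Cc = ext0 n (c t0)"
  have blk2: "blk r < 2" if "r \<in> R" for r
    using that unfolding R_def blk_def by (simp add: less_mult_imp_div_less)
  have valid: "valid_game n m R v tau A"
    unfolding valid_game_def
  proof (intro conjI ballI)
    show "finite R" by (simp add: R_def)
  next
    fix r assume "r \<in> R"
    then show "0 \<le> v r" using th blk2 by (simp add: v_def)
  next
    fix r assume "r \<in> R"
    show "tau r \<in> {1..m}" using t0 by (simp add: tau_def)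
  next
    fix i assume "i \<in> {1..n}"
    show "A i \<subseteq> Pow R" by (auto simp: A_def as_def bs_def)
  qed
  have a_act: "a \<in> actions n A" unfolding actions_def a_def A_def by auto
  have b_act: "b \<in> actions n A" unfolding actions_def b_def A_def by auto
  have cardag: "card {i\<in>{1..n}. P (pos i r)} = card {p\<in>{..<n}. P p}" for P r
    unfolding pos_def by (rule card_bij_pred[OF bij_agents[OF n1]])
  have load_a: "load n a r = X (blk r)" if r: "r \<in> R" for r
  proof -
    have "load n a r = card {i\<in>{1..n}. pos i r < X (blk r)}"
      unfolding load_def a_def as_def using r by (intro arg_cong[where f=card]) auto
    also have "\<dots> = card {p\<in>{..<n}. p < X (blk r)}" by (rule cardag)
    also have "\<dots> = X (blk r)" using props[OF blk2[OF r]] by (intro card_lt) auto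
    finally show ?thesis .
  qed
  have load_b: "load n b r = Y (blk r)" if r: "r \<in> R" for r
  proof -
    have "load n b r = card {i\<in>{1..n}. pos i r < Z (blk r) \<or> (X (blk r) \<le> pos i r \<and> pos i r < W (blk r))}"
      unfolding load_def b_def bs_def using r by (intro arg_cong[where f=card]) auto
    also have "\<dots> = card {p\<in>{..<n}. p < Z (blk r) \<or> (X (blk r) \<le> p \<and> p < W (blk r))}" by (rule cardag)
    also have "\<dots> = Z (blk r) + (W (blk r) - X (blk r))" using props[OF blk2[OF r]] by (intro card_two) auto
    also have "\<dots> = Y (blk r)" using props[OF blk2[OF r]] by auto
    finally show ?thesis .
  qed
  have sumR: "(\<Sum>r\<in>R. F (blk r) (pos i r)) = (\<Sum>p<n. F 0 p) + (\<Sum>p<n. F 1 p)" for F i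
    unfolding R_def blk_def pos_def by (rule sum_rot[OF n1])
  have const_sum: "(\<Sum>p<n. (q::real)) = real n * q" for q by simp
  have costa: "sys_cost n c R v tau a = real n * (\<theta> 0 * trC n (c t0) (S 0) + \<theta> 1 * trC n (c t0) (S 1))"
  proof -
    have "sys_cost n c R v tau a = (\<Sum>r\<in>R. (\<lambda>k p. \<theta> k * Cc (X k)) (blk r) (pos 1 r))"
      unfolding sys_cost_def by (rule sum.cong) (auto simp: load_a v_def tau_def Cc_def)
    also have "\<dots> = real n * (\<theta> 0 * Cc (X 0)) + real n * (\<theta> 1 * Cc (X 1))"
      using sumR[of "\<lambda>k p. \<theta> k * Cc (X k)" 1] by simp
    finally show ?thesis by (simp add: trC_def Cc_def X_def algebra_simps)
  qed
  have costb: "sys_cost n c R v tau b = real n * (\<theta> 0 * trD n (c t0) (S 0) + \<theta> 1 * trD n (c t0) (S 1))"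
  proof -
    have "sys_cost n c R v tau b = (\<Sum>r\<in>R. (\<lambda>k p. \<theta> k * Cc (Y k)) (blk r) (pos 1 r))"
      unfolding sys_cost_def by (rule sum.cong) (auto simp: load_b v_def tau_def Cc_def)
    also have "\<dots> = real n * (\<theta> 0 * Cc (Y 0)) + real n * (\<theta> 1 * Cc (Y 1))"
      using sumR[of "\<lambda>k p. \<theta> k * Cc (Y k)" 1] by simp
    finally show ?thesis by (simp add: trD_def Cc_def Y_def algebra_simps)
  qed
  have ac: "agent_cost n f v tau a i = real (X 0) * (\<theta> 0 * G (X 0)) + real (X 1) * (\<theta> 1 * G (X 1))"
    if i: "i \<in> {1..n}" for i
  proof -
    have ai: "a i = as i" using i by (simp add: a_def)
    have "agent_cost n f v tau a i = (\<Sum>r\<in>{r\<in>R. pos i r < X (blk r)}. v r * G (load n a r))"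
      unfolding agent_cost_def ai as_def by (simp add: tau_def G_def)
    also have "\<dots> = (\<Sum>r\<in>R. if pos i r < X (blk r) then v r * G (load n a r) else 0)"
      by (rule sum.inter_filter) (simp add: R_def)
    also have "\<dots> = (\<Sum>r\<in>R. (\<lambda>k p. if p < X k then \<theta> k * G (X k) else 0) (blk r) (pos i r))"
      by (rule sum.cong) (auto simp: load_a v_def)
    also have "\<dots> = (\<Sum>p<n. if p < X 0 then \<theta> 0 * G (X 0) else 0) + (\<Sum>p<n. if p < X 1 then \<theta> 1 * G (X 1) else 0)"
      by (rule sumR[of "\<lambda>k p. if p < X k then \<theta> k * G (X k) else 0" i])
    also have "\<dots> = real (X 0) * (\<theta> 0 * G (X 0)) + real (X 1) * (\<theta> 1 * G (X 1))"
      using props[of 0] props[of 1] by (simp add: sum_ind)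
    finally show ?thesis .
  qed
  have dc: "agent_cost n f v tau (a(i := bs i)) i
      = real (Z 0) * (\<theta> 0 * G (X 0)) + real (W 0 - X 0) * (\<theta> 0 * G (X 0 + 1))
      + (real (Z 1) * (\<theta> 1 * G (X 1)) + real (W 1 - X 1) * (\<theta> 1 * G (X 1 + 1)))"
    if i: "i \<in> {1..n}" for i
  proof -
    have ai: "a i = as i" using i by (simp add: a_def)
    have "agent_cost n f v tau (a(i := bs i)) i = (\<Sum>r\<in>bs i. v r * G (load n (a(i := bs i)) r))"
      unfolding agent_cost_def by (simp add: tau_def G_def)
    also have "\<dots> = (\<Sum>r\<in>R. if pos i r < Z (blk r) \<or> (X (blk r) \<le> pos i r \<and> pos i r < W (blk r))
        then v r * G (load n (a(i := bs i)) r) else 0)"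
      unfolding bs_def by (rule sum.inter_filter) (simp add: R_def)
    also have "\<dots> = (\<Sum>r\<in>R. (\<lambda>k p. if p < Z k then \<theta> k * G (X k) else if X k \<le> p \<and> p < W k then \<theta> k * G (X k + 1) else 0) (blk r) (pos i r))"
    proof (rule sum.cong[OF refl])
      fix r assume r: "r \<in> R"
      have pr: "Z (blk r) \<le> X (blk r)" using props[OF blk2[OF r]] by simp
      show "(if pos i r < Z (blk r) \<or> (X (blk r) \<le> pos i r \<and> pos i r < W (blk r))
          then v r * G (load n (a(i := bs i)) r) else 0)
        = (\<lambda>k p. if p < Z k then \<theta> k * G (X k) else if X k \<le> p \<and> p < W k then \<theta> k * G (X k + 1) else 0) (blk r) (pos i r)"
      proof (cases "pos i r < Z (blk r) \<or> (X (blk r) \<le> pos i r \<and> pos i r < W (blk r))")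
        case True
        then have rb: "r \<in> bs i" using r by (simp add: bs_def)
        have lu: "load n (a(i := bs i)) r = (if r \<in> a i then load n a r else load n a r + 1)"
          by (rule load_upd[OF i rb])
        have "r \<in> a i \<longleftrightarrow> pos i r < X (blk r)" using r by (simp add: ai as_def)
        then show ?thesis using True pr lu load_a[OF r] by (auto simp: v_def)
      qed auto
    qed
    also have "\<dots> = (\<Sum>p<n. if p < Z 0 then \<theta> 0 * G (X 0) else if X 0 \<le> p \<and> p < W 0 then \<theta> 0 * G (X 0 + 1) else 0)
        + (\<Sum>p<n. if p < Z 1 then \<theta> 1 * G (X 1) else if X 1 \<le> p \<and> p < W 1 then \<theta> 1 * G (X 1 + 1) else 0)"
      by (rule sumR[of "\<lambda>k p. if p < Z k then \<theta> k * G (X k) else if X k \<le> p \<and> p < W k then \<theta> k * G (X k + 1) else 0" i])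
    also have "\<dots> = real (Z 0) * (\<theta> 0 * G (X 0)) + real (W 0 - X 0) * (\<theta> 0 * G (X 0 + 1))
      + (real (Z 1) * (\<theta> 1 * G (X 1)) + real (W 1 - X 1) * (\<theta> 1 * G (X 1 + 1)))"
      using props[of 0] props[of 1] by (simp add: sum_ind2)
    finally show ?thesis .
  qed
  have NE: "is_NE n f v tau A a"
    unfolding is_NE_def
  proof (intro conjI ballI a_act)
    fix i ai assume i: "i \<in> {1..n}" and ai: "ai \<in> A i"
    show "agent_cost n f v tau a i \<le> agent_cost n f v tau (a(i := ai)) i"
    proof (cases "ai = as i")
      case True
      then have "a i = ai" using i by (simp add: a_def)
      then have "a(i := ai) = a" by (rule fun_upd_idem)
      then show ?thesis by simp
    next
      case False
      then have aib: "ai = bs i" using ai by (simp add: A_def)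
      have e: "trE n (f t0) (S k) = real (W k - X k) * G (X k + 1) - (real (X k) - real (Z k)) * G (X k)"
        if "k < 2" for k
        using props[OF that] unfolding trE_def G_def X_def Y_def Z_def by (simp add: of_nat_diff)
      have e0: "trE n (f t0) (S 0) = real (W 0 - X 0) * G (X 0 + 1) - (real (X 0) - real (Z 0)) * G (X 0)"
        using e[of 0] by simp
      have e1: "trE n (f t0) (S 1) = real (W 1 - X 1) * G (X 1 + 1) - (real (X 1) - real (Z 1)) * G (X 1)"
        using e[of 1] by simp
      have "agent_cost n f v tau (a(i := ai)) i - agent_cost n f v tau a i
          = \<theta> 0 * trE n (f t0) (S 0) + \<theta> 1 * trE n (f t0) (S 1)"
        unfolding aib dc[OF i] ac[OF i] e0 e1
        by (simp add: algebra_simps)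
      then show ?thesis using NEc by simp
    qed
  qed
  show ?thesis using valid NE b_act costa costb by blast
qed

lemma ereal_lower_aux:
  fixes Q :: ereal
  assumes Ca: "Ca > 0" and r0: "r \<ge> 0" and Q0: "0 \<le> Q" and Qb: "Q \<le> ereal Cb" and Cb: "Cb \<le> r * Ca"
  shows "1 / ereal r \<le> ereal Ca / Q"
proof -
  have "Q \<noteq> \<infinity>" using Qb by auto
  moreover have "Q \<noteq> -\<infinity>" using Q0 by auto
  ultimately obtain q where q: "Q = ereal q" by (cases Q) auto
  have q0: "q \<ge> 0" and qb: "q \<le> r * Ca" using Q0 Qb Cb q by auto
  show ?thesis
  proof (cases "q = 0")
    case True
    then have "ereal Ca / Q = \<infinity>" using q Ca by simp
    then show ?thesis by simp
  next
    case False
    then have qp: "q > 0" using q0 by simp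
    then have "r * Ca > 0" using qb by simp
    then have rp: "r > 0" using Ca r0 by (simp add: zero_less_mult_iff)
    have "1 / r \<le> Ca / q" using qb qp rp Ca by (simp add: divide_simps mult.commute)
    moreover have "ereal Ca / Q = ereal (Ca / q)" using q qp by simp
    moreover have "1 / ereal r = ereal (1 / r)" using rp by (simp add: one_div_ereal)
    ultimately show ?thesis by simp
  qed
qed

lemma lower_one:
  assumes n1: "n \<ge> 1" and t0: "t0 \<in> {1..m}"
    and Opt: "\<forall>t\<in>{1..m}. lp_optimal n (c t) (fstar t) (\<rho> t)"
  shows "1 / ereal (\<rho> t0) \<le> PoA_class n m c f"
proof -
  have O: "lp_optimal n (c t0) (fstar t0) (\<rho> t0)" using Opt t0 by auto
  have cpos: "\<forall>t\<in>{1..m}. \<forall>x\<in>{1..n}. c t x \<ge> 0" using Opt opt_c_nonneg by auto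
  obtain s t \<theta>1 \<theta>2 where st: "s \<in> IRset n" "t \<in> IRset n" and th: "\<theta>1 \<ge> 0" "\<theta>2 \<ge> 0"
    and E: "\<theta>1 * trE n (f t0) s + \<theta>2 * trE n (f t0) t \<ge> 0"
    and C: "\<theta>1 * trC n (c t0) s + \<theta>2 * trC n (c t0) t > 0"
    and D: "\<theta>1 * trD n (c t0) s + \<theta>2 * trD n (c t0) t \<le> \<rho> t0 * (\<theta>1 * trC n (c t0) s + \<theta>2 * trC n (c t0) t)"
    using dual[OF O, of "f t0"] by blast
  define S where "S k = (if k = 0 then s else t)" for k :: nat
  define \<theta> where "\<theta> k = (if k = 0 then \<theta>1 else \<theta>2)" for k :: nat
  have SI: "\<And>k. k < 2 \<Longrightarrow> S k \<in> IRset n" using st by (simp add: S_def)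
  have thk: "\<And>k. k < 2 \<Longrightarrow> \<theta> k \<ge> 0" using th by (simp add: \<theta>_def)
  have NEc: "\<theta> 0 * trE n (f t0) (S 0) + \<theta> 1 * trE n (f t0) (S 1) \<ge> 0"
    using E by (simp add: S_def \<theta>_def)
  obtain R v tau A a b where V: "valid_game n m R v tau A" and NE: "is_NE n f v tau A a"
    and b: "b \<in> actions n A"
    and ca: "sys_cost n c R v tau a = real n * (\<theta> 0 * trC n (c t0) (S 0) + \<theta> 1 * trC n (c t0) (S 1))"
    and cb: "sys_cost n c R v tau b = real n * (\<theta> 0 * trD n (c t0) (S 0) + \<theta> 1 * trD n (c t0) (S 1))"
    using game[where S=S and \<theta>=\<theta> and f=f and c=c, OF n1 t0 SI thk NEc] by blast
  define Ca where "Ca = sys_cost n c R v tau a"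
  define Cb where "Cb = sys_cost n c R v tau b"
  have Ca_eq: "Ca = real n * (\<theta>1 * trC n (c t0) s + \<theta>2 * trC n (c t0) t)"
    using ca by (simp add: Ca_def S_def \<theta>_def)
  have Cb_eq: "Cb = real n * (\<theta>1 * trD n (c t0) s + \<theta>2 * trD n (c t0) t)"
    using cb by (simp add: Cb_def S_def \<theta>_def)
  have Cap: "Ca > 0" using Ca_eq C n1 by simp
  have CbC: "Cb \<le> \<rho> t0 * Ca"
  proof -
    have "Cb \<le> real n * (\<rho> t0 * (\<theta>1 * trC n (c t0) s + \<theta>2 * trC n (c t0) t))"
      unfolding Cb_eq by (rule mult_left_mono[OF D]) simp
    then show ?thesis unfolding Ca_eq by (simp add: algebra_simps)
  qed
  define Q where "Q = (INF b\<in>actions n A. ereal (sys_cost n c R v tau b))"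
  have Q0: "0 \<le> Q" unfolding Q_def
    by (rule INF_greatest) (use sys_cost_nonneg[OF V cpos] in simp)
  have Qb: "Q \<le> ereal Cb" unfolding Q_def Cb_def by (rule INF_lower[OF b])
  have r0: "\<rho> t0 \<ge> 0" using opt_rho_nonneg[OF O] .
  have "1 / ereal (\<rho> t0) \<le> ereal Ca / Q"
    by (rule ereal_lower_aux[OF Cap r0 Q0 Qb CbC])
  also have "ereal Ca / Q \<le> PoA_game n c f R v tau A"
    unfolding PoA_game_def Q_def Ca_def by (rule Sup_upper) (use NE in blast)
  also have "PoA_game n c f R v tau A \<le> PoA_class n m c f"
    unfolding PoA_class_def by (rule Sup_upper) (use V in blast)
  finally show ?thesis .
qed

theorem theorem6:
  fixes n m :: nat and c fstar :: "nat \<Rightarrow> nat \<Rightarrow> real" and \<rho> :: "nat \<Rightarrow> real"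
  assumes "n \<ge> 1" and "m \<ge> 1"
    and "\<forall>t\<in>{1..m}. lp_optimal n (c t) (fstar t) (\<rho> t)"
  shows "(\<forall>t\<in>{1..m}. \<forall>x\<in>{1..n}. fstar t x \<ge> 0)
    \<and> (\<forall>f :: nat \<Rightarrow> nat \<Rightarrow> real. (\<forall>t\<in>{1..m}. \<forall>x\<in>{1..n}. f t x \<ge> 0)
          \<longrightarrow> PoA_class n m c fstar \<le> PoA_class n m c f)
    \<and> PoA_class n m c fstar = (MAX t\<in>{1..m}. 1 / ereal (\<rho> t))"
proof -
  note n1 = assms(1) and Opt = assms(3)
  have m1: "{1..m} \<noteq> {}" using assms(2) by simp
  have c1: "\<forall>t\<in>{1..m}. \<forall>x\<in>{1..n}. fstar t x \<ge> 0"
    using Opt opt_f_nonneg by auto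
  define M where "M = (MAX t\<in>{1..m}. 1 / ereal (\<rho> t))"
  define rm where "rm = Min (\<rho> ` {1..m})"
  have rm_in: "rm \<in> \<rho> ` {1..m}" unfolding rm_def using m1 by (intro Min_in) auto
  then obtain t0 where t0: "t0 \<in> {1..m}" "rm = \<rho> t0" by auto
  have "lp_optimal n (c t0) (fstar t0) (\<rho> t0)" using Opt t0 by auto
  then have rm0: "rm \<ge> 0" using t0 opt_rho_nonneg by simp
  have rmle: "\<forall>t\<in>{1..m}. rm \<le> \<rho> t" unfolding rm_def by auto
  have U: "PoA_class n m c fstar \<le> M"
  proof -
    have "PoA_class n m c fstar \<le> 1 / ereal rm" by (rule PoA_class_le[OF Opt rm0 rmle])
    also have "\<dots> = 1 / ereal (\<rho> t0)" using t0 by simp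
    also have "\<dots> \<le> M" unfolding M_def using t0 by (intro Max_ge) auto
    finally show ?thesis .
  qed
  have L: "M \<le> PoA_class n m c f" for f
    unfolding M_def
    by (rule Max.boundedI) (use m1 lower_one[OF n1 _ Opt] in auto)
  show ?thesis
  proof (intro conjI allI impI)
    show "\<forall>t\<in>{1..m}. \<forall>x\<in>{1..n}. fstar t x \<ge> 0" by (rule c1)
  next
    fix f :: "nat \<Rightarrow> nat \<Rightarrow> real"
    show "PoA_class n m c fstar \<le> PoA_class n m c f" using U L[of f] by (rule order_trans)
  next
    show "PoA_class n m c fstar = (MAX t\<in>{1..m}. 1 / ereal (\<rho> t))"
      using U L[of fstar] unfolding M_def by (rule antisym)
  qed
qed

end
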